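(* Let $K_c\subset\mathbb{E}^3$ be a cap body of a ball which is centrally symmetric. Then the illumination number of $K_c$ satisfies $I(K_c)\le 6$. Moreover this bound is sharp: there exists a centrally symmetric cap body of a ball in $\mathbb{E}^3$ whose illumination number equals $6$.
   Context: A cap body of a ball is the convex hull of a closed Euclidean ball $B^d[\boldsymbol c,r]\subset\mathbb{E}^d$ and a countable set of points $\{\boldsymbol v_i\mid i\in I\}\subset \mathbb{E}^d\setminus B^d[\boldsymbol c,r]$ such that for any two distinct $i,j\in I$ the segment $\overline{\boldsymbol v_i\boldsymbol v_j}$ intersects $B^d[\boldsymbol c,r]$. For a convex body $K$ (compact convex set with nonempty interior), a direction $\boldsymbol u\in\mathbb{S}^{d-1}$ illuminates a boundary point $\boldsymbol p$ of $K$ if $\boldsymbol p+\lambda\boldsymbol u$ lies in the interior of $K$ for some $\lambda>0$; the illumination number $I(K)$ is the smallest number of directions such that every boundary point of $K$ is illuminated by at least one of them. *)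

theory Defs
  imports "HOL-Analysis.Analysis"
begin

definition cap_body :: "'a::euclidean_space set \<Rightarrow> bool" where
  "cap_body K \<longleftrightarrow> (\<exists>c r V. r > 0 \<and> countable V \<and> V \<inter> cball c r = {} \<and>
     (\<forall>v\<in>V. \<forall>w\<in>V. v \<noteq> w \<longrightarrow> closed_segment v w \<inter> cball c r \<noteq> {}) \<and>
     K = convex hull (cball c r \<union> V))"

definition centrally_symmetric :: "'a::euclidean_space set \<Rightarrow> bool" where
  "centrally_symmetric K \<longleftrightarrow> (\<exists>x. \<forall>p\<in>K. 2 *\<^sub>R x - p \<in> K)"

definition illuminates :: "'a::euclidean_space set \<Rightarrow> 'a \<Rightarrow> 'a \<Rightarrow> bool" where
  "illuminates K u p \<longleftrightarrow> (\<exists>t>0. p + t *\<^sub>R u \<in> interior K)"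

definition illumination_number :: "'a::euclidean_space set \<Rightarrow> nat" where
  "illumination_number K = (LEAST n. \<exists>U. finite U \<and> card U = n \<and> U \<subseteq> sphere 0 1 \<and>
      (\<forall>p\<in>frontier K. \<exists>u\<in>U. illuminates K u p))"

end

theory Submission
  imports Defs
begin

lemma parseval3':
  fixes a b y :: "real^3"
  assumes "a \<bullet> a = 1" "b \<bullet> b = 1" "a \<bullet> b = 0"
  shows "(a \<bullet> y)^2 + (b \<bullet> y)^2 + (cross3 a b \<bullet> y)^2 = y \<bullet> y"
  using assms unfolding cross3_def inner_vec_def sum_3 vector_def
  apply simp
  by algebra

lemma amgm4: "4 * (X::real) * Y \<le> (X + Y)^2"
proof -
  have "0 \<le> (X - Y)^2" by simp
  then show ?thesis by (simp add: power2_eq_square algebra_simps)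
qed

lemma pair_basic:
  fixes v w :: "'a::real_inner"
  assumes v1: "v \<bullet> v > 1" and w1: "w \<bullet> w > 1" and t: "0 \<le> t" "t \<le> 1"
    and le: "norm ((1-t) *\<^sub>R v + t *\<^sub>R w) \<le> 1"
  shows "v \<bullet> w \<le> 1 \<and> (v \<bullet> v - 1) * (w \<bullet> w - 1) \<le> (1 - v \<bullet> w)^2"
proof -
  define A where "A = v \<bullet> v - 1"
  define B where "B = w \<bullet> w - 1"
  define c where "c = v \<bullet> w"
  have A: "A > 0" and B: "B > 0" using v1 w1 by (auto simp: A_def B_def)
  have "(norm ((1-t) *\<^sub>R v + t *\<^sub>R w))^2 \<le> 1"
    using le by (simp add: power_le_one)
  also have "(norm ((1-t) *\<^sub>R v + t *\<^sub>R w))^2 = (1-t)^2 * (A+1) + 2*t*(1-t)*c + t^2*(B+1)"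
    unfolding power2_norm_eq_inner A_def B_def c_def
    by (simp add: inner_add_left inner_add_right power2_eq_square algebra_simps inner_commute)
  finally have key: "(1-t)^2 * A + t^2 * B \<le> 2*t*(1-t)*(1 - c)"
    by (simp add: power2_eq_square algebra_simps)
  have t0: "t \<noteq> 0"
  proof
    assume "t = 0" then show False using key A by simp
  qed
  have t1: "t \<noteq> 1"
  proof
    assume "t = 1" then show False using key B by simp
  qed
  have tt: "t * (1-t) > 0" using t t0 t1 by simp
  have X: "(1-t)^2 * A > 0" using A t1 by simp
  have Y: "t^2 * B > 0" using B t0 by simp
  have c1: "1 - c \<ge> 0"
  proof (rule ccontr)
    assume "\<not> 1 - c \<ge> 0"
    then have "2*t*(1-t)*(1 - c) < 0" using tt by (simp add: mult_pos_neg)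
    then show False using key X Y by linarith
  qed
  have "4 * ((1-t)^2 * A) * (t^2 * B) \<le> ((1-t)^2 * A + t^2 * B)^2"
    using amgm4[of "(1-t)^2 * A" "t^2 * B"] by simp
  also have "\<dots> \<le> (2*t*(1-t)*(1 - c))^2"
    using key X Y by (intro power_mono) auto
  finally have "4 * (t*(1-t))^2 * (A * B) \<le> 4 * (t*(1-t))^2 * (1-c)^2"
    by (simp add: power2_eq_square algebra_simps)
  moreover have "(t*(1-t))^2 > 0" using t0 t1 by simp
  ultimately have "A * B \<le> (1-c)^2" using mult_le_cancel_left_pos[of "4 * (t*(1-t))^2"] by simp
  then show ?thesis using c1 by (simp add: A_def B_def c_def)
qed

lemma frame_exists:
  fixes f1 z :: "real^3"
  assumes f1: "f1 \<bullet> f1 = 1" and nz: "z - (z \<bullet> f1) *\<^sub>R f1 \<noteq> 0"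
  shows "\<exists>f2 f3. f2 \<bullet> f2 = 1 \<and> f3 \<bullet> f3 = 1 \<and> f1 \<bullet> f2 = 0 \<and> f3 \<bullet> z = 0
     \<and> z = (f1 \<bullet> z) *\<^sub>R f1 + (f2 \<bullet> z) *\<^sub>R f2
     \<and> (\<forall>y. (f1 \<bullet> y)^2 + (f2 \<bullet> y)^2 + (f3 \<bullet> y)^2 = y \<bullet> y)"
proof -
  define g where "g = z - (z \<bullet> f1) *\<^sub>R f1"
  define f2 where "f2 = (1 / norm g) *\<^sub>R g"
  define f3 where "f3 = cross3 f1 f2"
  have gn: "norm g > 0" using nz by (simp add: g_def)
  have f1g: "f1 \<bullet> g = 0" using f1 by (simp add: g_def inner_diff_right inner_commute)
  have f22: "f2 \<bullet> f2 = 1" using gn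
    by (simp add: f2_def power2_norm_eq_inner[symmetric] power2_eq_square)
  have f12: "f1 \<bullet> f2 = 0" using f1g by (simp add: f2_def)
  have f33: "f3 \<bullet> f3 = 1"
  proof -
    have "(norm f3)^2 + (f1 \<bullet> f2)^2 = (norm f1 * norm f2)^2"
      unfolding f3_def by (rule norm_cross_dot)
    then show ?thesis using f1 f22 f12
      by (simp add: power2_norm_eq_inner power_mult_distrib norm_eq_sqrt_inner)
  qed
  have f2g: "f2 \<bullet> g = norm g" using gn
    by (simp add: f2_def power2_norm_eq_inner[symmetric] power2_eq_square)
  have zdec: "z = (f1 \<bullet> z) *\<^sub>R f1 + (f2 \<bullet> z) *\<^sub>R f2"
  proof -
    have "f2 \<bullet> z = f2 \<bullet> g" using f12 by (simp add: g_def inner_diff_right inner_commute)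
    then have "(f2 \<bullet> z) *\<^sub>R f2 = g" using gn f2g by (simp add: f2_def)
    then show ?thesis by (simp add: g_def inner_commute)
  qed
  have f3z: "f3 \<bullet> z = 0"
    by (subst zdec) (simp add: f3_def inner_add_right dot_cross_self inner_commute)
  have pars: "\<forall>y. (f1 \<bullet> y)^2 + (f2 \<bullet> y)^2 + (f3 \<bullet> y)^2 = y \<bullet> y"
    using parseval3' f1 f22 f12 unfolding f3_def by blast
  show ?thesis using f22 f33 f12 f3z zdec pars by blast
qed

lemma sq_half: "0 \<le> (x::real) \<Longrightarrow> 1/4 \<le> x^2 \<Longrightarrow> 1/2 \<le> x"
proof (rule ccontr)
  assume "0 \<le> x" "1/4 \<le> x^2" "\<not> 1/2 \<le> x"
  then have "x * x < (1/2) * (1/2)" by (intro mult_strict_mono) auto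
  then show False using \<open>1/4 \<le> x^2\<close> by (simp add: power2_eq_square)
qed

lemma quot_sixth: "\<bar>a\<bar> \<le> 1/2 \<Longrightarrow> 3/2 \<le> b \<Longrightarrow> a^2 / b \<le> (1/6::real)"
proof -
  assume a: "\<bar>a\<bar> \<le> 1/2" and b: "3/2 \<le> b"
  have "\<bar>a\<bar> * \<bar>a\<bar> \<le> (1/2) * (1/2)" using a by (intro mult_mono) auto
  then have "a^2 \<le> 1/4" by (simp add: power2_eq_square)
  then have "a^2 / b \<le> (1/4) / b" using b by (intro divide_right_mono) auto
  also have "\<dots> \<le> (1/4) / (3/2)" using b by (intro divide_left_mono) auto
  finally show ?thesis by simp
qed

locale capW =
  fixes W :: "(real^3) set"
  assumes W1: "\<forall>w\<in>W. w \<bullet> w > 1" and Wsym: "\<forall>w\<in>W. -w \<in> W"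
    and Wp: "\<forall>v\<in>W. \<forall>w\<in>W. v \<noteq> w \<longrightarrow> v \<bullet> w \<le> 1 \<and> (v \<bullet> v - 1) * (w \<bullet> w - 1) \<le> (1 - v \<bullet> w)^2"
begin

lemma big_pair:
  assumes v: "v \<in> W" and w: "w \<in> W" and bv: "v \<bullet> v \<ge> 3/2" and bw: "w \<bullet> w \<ge> 3/2"
    and d1: "w \<noteq> v" and d2: "w \<noteq> -v"
  shows "\<bar>v \<bullet> w\<bar> \<le> 1/2"
proof -
  have AB: "(v \<bullet> v - 1) * (w \<bullet> w - 1) \<ge> 1/4"
  proof -
    have "(1/2) * (1/2) \<le> (v \<bullet> v - 1) * (w \<bullet> w - 1)" using bv bw by (intro mult_mono) auto
    then show ?thesis by simp
  qed
  have 1: "v \<bullet> w \<le> 1" "(v \<bullet> v - 1) * (w \<bullet> w - 1) \<le> (1 - v \<bullet> w)^2"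
    using Wp v w d1 by auto
  have mw: "-w \<in> W" using Wsym w by auto
  have "v \<noteq> -w" using d2 by auto
  then have 2: "v \<bullet> (-w) \<le> 1 \<and> (v \<bullet> v - 1) * ((-w) \<bullet> (-w) - 1) \<le> (1 - v \<bullet> (-w))^2"
    using Wp v mw by blast
  then have 2: "- (v \<bullet> w) \<le> 1" "(v \<bullet> v - 1) * (w \<bullet> w - 1) \<le> (1 + v \<bullet> w)^2"
    by auto
  have "1/2 \<le> 1 - v \<bullet> w" using 1 AB by (intro sq_half) auto
  moreover have "1/2 \<le> 1 + v \<bullet> w" using 2 AB by (intro sq_half) auto
  ultimately show ?thesis by linarith
qed

lemma small_ok:
  assumes pars: "\<forall>y. (f1 \<bullet> y)^2 + (f2 \<bullet> y)^2 + (f3 \<bullet> y)^2 = y \<bullet> y"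
    and "w \<bullet> w < 3/2"
  shows "(f1 \<bullet> w)^2 > w \<bullet> w - 1 \<or> (f2 \<bullet> w)^2 > w \<bullet> w - 1 \<or> (f3 \<bullet> w)^2 > w \<bullet> w - 1"
  using pars[rule_format, of w] assms(2) by linarith

lemma some_orth:
  fixes f1 :: "real^3"
  shows "\<exists>z. z - (z \<bullet> f1) *\<^sub>R f1 \<noteq> 0"
proof -
  obtain y :: "real^3" where "y \<noteq> 0" "orthogonal f1 y"
    using orthogonal_to_vector_exists[of f1] by auto
  then have "y - (y \<bullet> f1) *\<^sub>R f1 \<noteq> 0" by (simp add: orthogonal_def inner_commute)
  then show ?thesis by blast
qed

definition good where
  "good f1 f2 f3 \<longleftrightarrow> f1 \<bullet> f1 = 1 \<and> f2 \<bullet> f2 = 1 \<and> f3 \<bullet> f3 = 1 \<and>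
     (\<forall>y. (f1 \<bullet> y)^2 + (f2 \<bullet> y)^2 + (f3 \<bullet> y)^2 = y \<bullet> y) \<and>
     (\<forall>w\<in>W. (f1 \<bullet> w)^2 > w \<bullet> w - 1 \<or> (f2 \<bullet> w)^2 > w \<bullet> w - 1 \<or> (f3 \<bullet> w)^2 > w \<bullet> w - 1)"

lemma f1_props:
  assumes "v1 \<in> W"
  defines "f1 \<equiv> (1 / norm v1) *\<^sub>R v1"
  shows "f1 \<bullet> f1 = 1" "\<And>y. (f1 \<bullet> y)^2 = (v1 \<bullet> y)^2 / (v1 \<bullet> v1)"
proof -
  have "v1 \<bullet> v1 > 1" using W1 assms(1) by auto
  then have n: "norm v1 > 0" by (metis inner_zero_left not_one_less_zero zero_less_norm_iff)
  show "f1 \<bullet> f1 = 1" using n by (simp add: f1_def power2_norm_eq_inner[symmetric] power2_eq_square)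
  fix y show "(f1 \<bullet> y)^2 = (v1 \<bullet> y)^2 / (v1 \<bullet> v1)"
    using n by (simp add: f1_def power2_norm_eq_inner[symmetric] power_divide)
qed

lemma core: "\<exists>f1 f2 f3. good f1 f2 f3"
proof (cases "\<exists>v1\<in>W. v1 \<bullet> v1 \<ge> 3/2")
  case False
  define f1 :: "real^3" where "f1 = axis 1 1"
  have f11: "f1 \<bullet> f1 = 1" by (simp add: f1_def)
  obtain z where "z - (z \<bullet> f1) *\<^sub>R f1 \<noteq> 0" using some_orth by blast
  then obtain f2 f3 where fr: "f2 \<bullet> f2 = 1" "f3 \<bullet> f3 = 1"
      "\<forall>y. (f1 \<bullet> y)^2 + (f2 \<bullet> y)^2 + (f3 \<bullet> y)^2 = y \<bullet> y"
    using frame_exists[OF f11] by blast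
  have "\<forall>w\<in>W. (f1 \<bullet> w)^2 > w \<bullet> w - 1 \<or> (f2 \<bullet> w)^2 > w \<bullet> w - 1 \<or> (f3 \<bullet> w)^2 > w \<bullet> w - 1"
  proof
    fix w assume "w \<in> W"
    then have "w \<bullet> w < 3/2" using False by auto
    then show "(f1 \<bullet> w)^2 > w \<bullet> w - 1 \<or> (f2 \<bullet> w)^2 > w \<bullet> w - 1 \<or> (f3 \<bullet> w)^2 > w \<bullet> w - 1"
      by (rule small_ok[OF fr(3)])
  qed
  then show ?thesis using f11 fr unfolding good_def by blast
next
  case True
  then obtain v1 where v1: "v1 \<in> W" "v1 \<bullet> v1 \<ge> 3/2" by blast
  define f1 where "f1 = (1 / norm v1) *\<^sub>R v1"
  have f11: "f1 \<bullet> f1 = 1" unfolding f1_def by (rule f1_props(1)[OF v1(1)])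
  have f1y: "\<And>y. (f1 \<bullet> y)^2 = (v1 \<bullet> y)^2 / (v1 \<bullet> v1)"
    unfolding f1_def by (rule f1_props(2)[OF v1(1)])
  have v1pos: "v1 \<bullet> v1 > 0" using v1 by linarith
  have hv1: "(f1 \<bullet> w)^2 > w \<bullet> w - 1" if "w = v1 \<or> w = -v1" for w
  proof -
    have "(v1 \<bullet> w)^2 = (v1 \<bullet> v1)^2" using that by auto
    then have "(f1 \<bullet> w)^2 = (v1 \<bullet> v1)^2 / (v1 \<bullet> v1)" using f1y[of w] by simp
    also have "\<dots> = v1 \<bullet> v1" using v1pos by (simp add: power2_eq_square)
    moreover have "w \<bullet> w = v1 \<bullet> v1" using that by auto
    ultimately show ?thesis by simp
  qed
  show ?thesis
  proof (cases "\<exists>v2\<in>W. v2 \<bullet> v2 \<ge> 3/2 \<and> v2 \<noteq> v1 \<and> v2 \<noteq> -v1")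
    case False
    obtain z where "z - (z \<bullet> f1) *\<^sub>R f1 \<noteq> 0" using some_orth by blast
    then obtain f2 f3 where fr: "f2 \<bullet> f2 = 1" "f3 \<bullet> f3 = 1"
        "\<forall>y. (f1 \<bullet> y)^2 + (f2 \<bullet> y)^2 + (f3 \<bullet> y)^2 = y \<bullet> y"
      using frame_exists[OF f11] by blast
    have "\<forall>w\<in>W. (f1 \<bullet> w)^2 > w \<bullet> w - 1 \<or> (f2 \<bullet> w)^2 > w \<bullet> w - 1 \<or> (f3 \<bullet> w)^2 > w \<bullet> w - 1"
    proof
      fix w assume w: "w \<in> W"
      show "(f1 \<bullet> w)^2 > w \<bullet> w - 1 \<or> (f2 \<bullet> w)^2 > w \<bullet> w - 1 \<or> (f3 \<bullet> w)^2 > w \<bullet> w - 1"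
      proof (cases "w \<bullet> w < 3/2")
        case True then show ?thesis by (rule small_ok[OF fr(3)])
      next
        case False
        then have "w = v1 \<or> w = -v1" using \<open>\<not> (\<exists>v2\<in>W. _)\<close> w by auto
        then show ?thesis using hv1 by blast
      qed
    qed
    then show ?thesis using f11 fr unfolding good_def by blast
  next
    case True
    then obtain v2 where v2: "v2 \<in> W" "v2 \<bullet> v2 \<ge> 3/2" "v2 \<noteq> v1" "v2 \<noteq> -v1" by blast
    have a2: "(f1 \<bullet> v2)^2 \<le> 1/6"
      using f1y[of v2] quot_sixth[OF big_pair[OF v1(1) v2(1) v1(2) v2(2) v2(3) v2(4)] v1(2)] by simp
    have nz: "v2 - (v2 \<bullet> f1) *\<^sub>R f1 \<noteq> 0"
    proof
      assume "v2 - (v2 \<bullet> f1) *\<^sub>R f1 = 0"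
      define a where "a = v2 \<bullet> f1"
      have "v2 = a *\<^sub>R f1" using \<open>v2 - (v2 \<bullet> f1) *\<^sub>R f1 = 0\<close> unfolding a_def by simp
      then have "v2 \<bullet> v2 = a^2 * (f1 \<bullet> f1)"
        by (simp add: power2_eq_square)
      moreover have "a^2 \<le> 1/6" using a2 by (simp add: a_def inner_commute)
      ultimately show False using f11 v2(2) by simp
    qed
    obtain f2 f3 where fr: "f2 \<bullet> f2 = 1" "f3 \<bullet> f3 = 1" "f1 \<bullet> f2 = 0" "f3 \<bullet> v2 = 0"
        "v2 = (f1 \<bullet> v2) *\<^sub>R f1 + (f2 \<bullet> v2) *\<^sub>R f2"
        and pars: "\<forall>y. (f1 \<bullet> y)^2 + (f2 \<bullet> y)^2 + (f3 \<bullet> y)^2 = y \<bullet> y"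
      using frame_exists[OF f11 nz] by blast
    have b2: "(f2 \<bullet> v2)^2 = v2 \<bullet> v2 - (f1 \<bullet> v2)^2" using pars[rule_format, of v2] fr(4) by simp
    have "\<forall>w\<in>W. (f1 \<bullet> w)^2 > w \<bullet> w - 1 \<or> (f2 \<bullet> w)^2 > w \<bullet> w - 1 \<or> (f3 \<bullet> w)^2 > w \<bullet> w - 1"
    proof
      fix w assume w: "w \<in> W"
      show "(f1 \<bullet> w)^2 > w \<bullet> w - 1 \<or> (f2 \<bullet> w)^2 > w \<bullet> w - 1 \<or> (f3 \<bullet> w)^2 > w \<bullet> w - 1"
      proof (cases "w \<bullet> w < 3/2")
        case True then show ?thesis by (rule small_ok[OF pars])
      next
        case big: False
        show ?thesis
        proof (cases "w = v1 \<or> w = -v1")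
          case True then show ?thesis using hv1 by blast
        next
          case nv1: False
          show ?thesis
          proof (cases "w = v2 \<or> w = -v2")
            case True
            then have "(f2 \<bullet> w)^2 = (f2 \<bullet> v2)^2" by auto
            then show ?thesis using True b2 a2 by auto
          next
            case nv2: False
            show ?thesis
            proof (rule ccontr)
              assume "\<not> ?thesis"
              then have h: "(f1 \<bullet> w)^2 \<le> w \<bullet> w - 1" "(f2 \<bullet> w)^2 \<le> w \<bullet> w - 1" "(f3 \<bullet> w)^2 \<le> w \<bullet> w - 1"
                by auto
              have bw: "w \<bullet> w \<ge> 3/2" using big by simp
              have x1: "(f1 \<bullet> w)^2 \<le> 1/6"
                using f1y[of w] quot_sixth[OF big_pair[OF v1(1) w v1(2) bw] v1(2)] nv1 by auto
              have x2: "(f2 \<bullet> w)^2 \<ge> 5/6" using pars[rule_format, of w] h(3) x1 by linarith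
              have b43: "(f2 \<bullet> v2)^2 \<ge> 4/3" using b2 a2 v2(2) by linarith
              have "(4/3) * (5/6) \<le> (f2 \<bullet> v2)^2 * (f2 \<bullet> w)^2"
                using b43 x2 by (intro mult_mono) auto
              then have bx: "((f2 \<bullet> v2) * (f2 \<bullet> w))^2 \<ge> 10/9" by (simp add: power_mult_distrib)
              have "((f1 \<bullet> v2) * (f1 \<bullet> w))^2 \<le> (1/6) * (1/6)"
                unfolding power_mult_distrib using a2 x1 by (intro mult_mono) auto
              then have "((f1 \<bullet> v2) * (f1 \<bullet> w))^2 \<le> (1/6)^2"
                by (simp add: power2_eq_square)
              then have "\<bar>(f1 \<bullet> v2) * (f1 \<bullet> w)\<bar> \<le> \<bar>1/6\<bar>"
                by (simp only: abs_le_square_iff)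
              then have ax: "\<bar>(f1 \<bullet> v2) * (f1 \<bullet> w)\<bar> \<le> 1/6" by simp
              have dec: "v2 \<bullet> w = (f1 \<bullet> v2) * (f1 \<bullet> w) + (f2 \<bullet> v2) * (f2 \<bullet> w)"
              proof -
                define a where "a = f1 \<bullet> v2"
                define b where "b = f2 \<bullet> v2"
                have v2eq: "v2 = a *\<^sub>R f1 + b *\<^sub>R f2" unfolding a_def b_def by (rule fr(5))
                have "v2 \<bullet> w = a * (f1 \<bullet> w) + b * (f2 \<bullet> w)"
                  by (subst v2eq) (simp add: inner_add_left)
                then show ?thesis by (simp add: a_def b_def)
              qed
              have "\<bar>v2 \<bullet> w\<bar> \<le> 1/2"
                using big_pair[OF v2(1) w v2(2) bw] nv2 by auto
              then have "\<bar>(f2 \<bullet> v2) * (f2 \<bullet> w)\<bar> \<le> 2/3" using dec ax by linarith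
              then have "\<bar>(f2 \<bullet> v2) * (f2 \<bullet> w)\<bar> \<le> \<bar>2/3\<bar>" by simp
              then have "((f2 \<bullet> v2) * (f2 \<bullet> w))^2 \<le> (2/3)^2"
                by (simp only: abs_le_square_iff)
              moreover have "(2/3::real)^2 = 4/9" by (simp add: power2_eq_square)
              ultimately show False using bx by linarith
            qed
          qed
        qed
      qed
    qed
    then show ?thesis using f11 fr pars unfolding good_def by blast
  qed
qed

end

locale capK =
  fixes c :: "real^3" and r :: real and V :: "(real^3) set" and K :: "(real^3) set"
  assumes r: "r > 0" and Vout: "V \<inter> cball c r = {}"
    and seg: "\<forall>v\<in>V. \<forall>w\<in>V. v \<noteq> w \<longrightarrow> closed_segment v w \<inter> cball c r \<noteq> {}"
    and Kdef: "K = convex hull (cball c r \<union> V)"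
begin

lemma Vfar: "v \<in> V \<Longrightarrow> norm (v - c) > r"
  using Vout by (auto simp: dist_norm norm_minus_commute)

lemma ball_in_K: "cball c r \<subseteq> K" and V_in_K: "V \<subseteq> K"
  unfolding Kdef by (auto intro: hull_inc)

lemma ball_interior: "ball c r \<subseteq> interior K"
  using ball_in_K by (intro interior_maximal) auto

lemma cs_ball: "y \<in> cball c r \<Longrightarrow> n \<bullet> (y - c) \<le> r * norm n"
proof -
  assume "y \<in> cball c r"
  then have "norm (y - c) \<le> r" by (simp add: dist_norm norm_minus_commute)
  then have "norm n * norm (y - c) \<le> norm n * r" by (intro mult_left_mono) auto
  moreover have "n \<bullet> (y - c) \<le> norm n * norm (y - c)" by (rule norm_cauchy_schwarz)
  ultimately show ?thesis by (simp add: mult.commute)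
qed

lemma half_K:
  assumes "\<forall>y\<in>cball c r \<union> V. n \<bullet> y \<le> a"
  shows "\<forall>y\<in>K. n \<bullet> y \<le> a"
proof -
  have "K \<subseteq> {y. n \<bullet> y \<le> a}"
    unfolding Kdef using assms by (intro hull_minimal convex_halfspace_le) auto
  then show ?thesis by auto
qed

lemma stick_disj:
  assumes v: "v \<in> V" and w: "w \<in> V" and vw: "v \<noteq> w"
    and sv: "n \<bullet> (v - c) > r * norm n" and sw: "n \<bullet> (w - c) > r * norm n"
  shows False
proof -
  obtain y where y: "y \<in> closed_segment v w" "y \<in> cball c r" using seg v w vw by blast
  then obtain t where t: "0 \<le> t" "t \<le> 1" "y = (1 - t) *\<^sub>R v + t *\<^sub>R w" by (auto simp: in_segment)
  have "y - c = (1 - t) *\<^sub>R (v - c) + t *\<^sub>R (w - c)" using t(3) by (simp add: algebra_simps)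
  then have e: "n \<bullet> (y - c) = (1 - t) * (n \<bullet> (v - c)) + t * (n \<bullet> (w - c))"
    by (simp add: inner_add_right)
  define m where "m = min (n \<bullet> (v - c)) (n \<bullet> (w - c))"
  have "(1 - t) * m \<le> (1 - t) * (n \<bullet> (v - c))" using t by (intro mult_left_mono) (auto simp: m_def)
  moreover have "t * m \<le> t * (n \<bullet> (w - c))" using t by (intro mult_left_mono) (auto simp: m_def)
  ultimately have "m \<le> n \<bullet> (y - c)" using e by (simp add: algebra_simps)
  moreover have "m > r * norm n" using sv sw by (simp add: m_def)
  moreover have "n \<bullet> (y - c) \<le> r * norm n" using cs_ball y(2) by blast
  ultimately show False by linarith
qed

definition "W = (\<lambda>v. (1 / r) *\<^sub>R (v - c)) ` V"

lemma W1: "\<forall>w\<in>W. w \<bullet> w > 1"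
proof
  fix w assume "w \<in> W"
  then obtain v where v: "v \<in> V" "w = (1 / r) *\<^sub>R (v - c)" by (auto simp: W_def)
  have "norm w = norm (v - c) / r" using r v(2) by simp
  also have "\<dots> > 1" using Vfar[OF v(1)] r by simp
  finally have "norm w > 1" .
  then have "norm w * norm w > 1 * 1" by (intro mult_strict_mono) auto
  then show "w \<bullet> w > 1" by (simp add: norm_eq_sqrt_inner)
qed

lemma Wp: "\<forall>v\<in>W. \<forall>w\<in>W. v \<noteq> w \<longrightarrow> v \<bullet> w \<le> 1 \<and> (v \<bullet> v - 1) * (w \<bullet> w - 1) \<le> (1 - v \<bullet> w)^2"
proof (intro ballI impI)
  fix v' w' assume v': "v' \<in> W" and w': "w' \<in> W" and ne: "v' \<noteq> w'"
  obtain v where v: "v \<in> V" "v' = (1 / r) *\<^sub>R (v - c)" using v' by (auto simp: W_def)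
  obtain w where w: "w \<in> V" "w' = (1 / r) *\<^sub>R (w - c)" using w' by (auto simp: W_def)
  have "v \<noteq> w" using ne v w by auto
  then obtain y where y: "y \<in> closed_segment v w" "y \<in> cball c r" using seg v w by blast
  then obtain t where t: "0 \<le> t" "t \<le> 1" "y = (1 - t) *\<^sub>R v + t *\<^sub>R w" by (auto simp: in_segment)
  have "(1 - t) *\<^sub>R v' + t *\<^sub>R w' = (1 / r) *\<^sub>R (y - c)"
    unfolding t(3) v(2) w(2) using r by (simp add: vec_eq_iff field_simps)
  moreover have "norm ((1 / r) *\<^sub>R (y - c)) \<le> 1"
    using y(2) r by (simp add: dist_norm norm_minus_commute)
  ultimately have "norm ((1 - t) *\<^sub>R v' + t *\<^sub>R w') \<le> 1" by simp
  then show "v' \<bullet> w' \<le> 1 \<and> (v' \<bullet> v' - 1) * (w' \<bullet> w' - 1) \<le> (1 - v' \<bullet> w')^2"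
    using pair_basic[of v' w' t] W1 v' w' t by auto
qed

lemma pair_orig:
  assumes "v \<in> V" "w \<in> V" "v \<noteq> w"
  shows "(v - c) \<bullet> (w - c) \<le> r^2"
proof -
  have "(1 / r) *\<^sub>R (v - c) \<noteq> (1 / r) *\<^sub>R (w - c)" using assms r by auto
  then have "((1 / r) *\<^sub>R (v - c)) \<bullet> ((1 / r) *\<^sub>R (w - c)) \<le> 1"
    using Wp assms unfolding W_def by blast
  then have "((v - c) \<bullet> (w - c)) / r^2 \<le> 1" by (simp add: power2_eq_square)
  then show ?thesis using r by (simp add: divide_le_eq)
qed

end

locale capKs = capK +
  fixes x :: "real^3"
  assumes sym: "\<forall>p\<in>K. 2 *\<^sub>R x - p \<in> K"
begin

lemma stick_exists:
  assumes nd: "n \<bullet> (x - c) > 0"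
  shows "\<exists>v\<in>V. n \<bullet> (v - c) > r * norm n"
proof (rule ccontr)
  assume "\<not> ?thesis"
  then have hV: "\<forall>v\<in>V. n \<bullet> v \<le> n \<bullet> c + r * norm n" by (auto simp: inner_diff_right)
  have n0: "n \<noteq> 0" using nd by auto
  have "\<forall>y\<in>cball c r \<union> V. n \<bullet> y \<le> n \<bullet> c + r * norm n"
  proof
    fix y assume "y \<in> cball c r \<union> V"
    then show "n \<bullet> y \<le> n \<bullet> c + r * norm n"
    proof
      assume "y \<in> cball c r"
      then have "n \<bullet> (y - c) \<le> r * norm n" by (rule cs_ball)
      then show ?thesis by (simp add: inner_diff_right)
    next
      assume "y \<in> V" then show ?thesis using hV by auto
    qed
  qed
  then have hK: "\<forall>y\<in>K. n \<bullet> y \<le> n \<bullet> c + r * norm n" by (rule half_K)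
  define b0 where "b0 = c - (r / norm n) *\<^sub>R n"
  have "b0 \<in> cball c r" using r n0 by (simp add: b0_def dist_norm)
  then have "b0 \<in> K" using ball_in_K by auto
  then have "2 *\<^sub>R x - b0 \<in> K" using sym by auto
  then have "n \<bullet> (2 *\<^sub>R x - b0) \<le> n \<bullet> c + r * norm n" using hK by auto
  moreover have "n \<bullet> (2 *\<^sub>R x - b0) = 2 * (n \<bullet> x) - n \<bullet> c + r * norm n"
  proof -
    have "n \<bullet> ((r / norm n) *\<^sub>R n) = r * norm n"
      using n0 by (simp add: power2_norm_eq_inner[symmetric] power2_eq_square)
    then show ?thesis by (simp add: b0_def inner_diff_right)
  qed
  ultimately have "n \<bullet> (x - c) \<le> 0" by (simp add: inner_diff_right)
  then show False using nd by simp
qed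

lemma center: "x = c"
proof (rule ccontr)
  assume "x \<noteq> c"
  define d where "d = x - c"
  have d0: "d \<bullet> d > 0" using \<open>x \<noteq> c\<close> by (simp add: d_def)
  obtain v0 where v0: "v0 \<in> V" "d \<bullet> (v0 - c) > r * norm d"
    using stick_exists[of d] d0 by (auto simp: d_def)
  obtain m0 :: "real^3" where m0: "m0 \<noteq> 0" "orthogonal d m0"
    using orthogonal_to_vector_exists[of d] by auto
  define m where "m = (if m0 \<bullet> (v0 - c) \<le> 0 then m0 else - m0)"
  have m: "m \<noteq> 0" "d \<bullet> m = 0" "m \<bullet> (v0 - c) \<le> 0"
    using m0 by (auto simp: m_def orthogonal_def)
  define T where "T = (\<bar>d \<bullet> (v0 - c)\<bar> + 1) / (r * norm m)"
  have T0: "T \<ge> 0" using r by (simp add: T_def)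
  define nT where "nT = d + T *\<^sub>R m"
  have md: "m \<bullet> d = 0" using m(2) by (simp add: inner_commute)
  have nTd: "nT \<bullet> d = d \<bullet> d" using md by (simp add: nT_def inner_add_left)
  have nTv: "nT \<bullet> (v0 - c) \<le> d \<bullet> (v0 - c)"
  proof -
    have "T * (m \<bullet> (v0 - c)) \<le> 0" using T0 m(3) by (simp add: mult_nonneg_nonpos)
    then show ?thesis by (simp add: nT_def inner_add_left)
  qed
  have nTn: "norm nT \<ge> T * norm m"
  proof -
    have "nT \<bullet> nT = d \<bullet> d + T^2 * (m \<bullet> m)"
      using m(2) md by (simp add: nT_def inner_add_left inner_add_right power2_eq_square)
    moreover have "(T * norm m)^2 = T^2 * (m \<bullet> m)" by (simp add: power_mult_distrib power2_norm_eq_inner)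
    moreover have "(norm nT)^2 = nT \<bullet> nT" by (simp add: power2_norm_eq_inner)
    ultimately have "(T * norm m)^2 \<le> (norm nT)^2" using d0 by linarith
    then show ?thesis using power2_le_imp_le[of "T * norm m" "norm nT"] by simp
  qed
  have "r * norm nT \<ge> r * (T * norm m)" using nTn r by (intro mult_left_mono) auto
  also have "r * (T * norm m) = \<bar>d \<bullet> (v0 - c)\<bar> + 1" using r m(1) by (simp add: T_def)
  finally have notA: "\<not> nT \<bullet> (v0 - c) > r * norm nT" using nTv by linarith
  define H where "H = {n :: real^3. inner d n > 0}"
  define A where "A = {n :: real^3. r * norm n < n \<bullet> (v0 - c)}"
  define B where "B = (\<Union>v\<in>V - {v0}. {n :: real^3. r * norm n < n \<bullet> (v - c)})"
  have cH: "connected H" unfolding H_def by (intro convex_connected convex_halfspace_gt)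
  have oA: "open A" unfolding A_def by (intro open_Collect_less continuous_intros)
  have oB: "open B" unfolding B_def by (intro open_UN ballI open_Collect_less continuous_intros)
  have cov: "H \<subseteq> A \<union> B"
  proof
    fix n assume "n \<in> H"
    then have "n \<bullet> (x - c) > 0" by (simp add: H_def d_def inner_commute)
    then obtain v where "v \<in> V" "n \<bullet> (v - c) > r * norm n" using stick_exists by blast
    then show "n \<in> A \<union> B" by (cases "v = v0") (auto simp: A_def B_def)
  qed
  have dis: "A \<inter> B \<inter> H = {}"
  proof (rule ccontr)
    assume "A \<inter> B \<inter> H \<noteq> {}"
    then obtain n v where "v \<in> V" "v \<noteq> v0" "r * norm n < n \<bullet> (v - c)" "r * norm n < n \<bullet> (v0 - c)"
      by (auto simp: A_def B_def)
    then show False using stick_disj[of v v0 n] v0(1) by auto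
  qed
  have "A \<inter> H \<noteq> {}" using v0 d0 by (auto simp: A_def H_def)
  moreover have "B \<inter> H \<noteq> {}"
  proof -
    have "nT \<in> H" using nTd d0 by (simp add: H_def inner_commute)
    moreover have "nT \<notin> A" using notA by (simp add: A_def)
    ultimately show ?thesis using cov by auto
  qed
  ultimately show False using connectedD[OF cH oA oB dis cov] by auto
qed

lemma exposed:
  assumes v: "v \<in> V" and y: "y \<in> K" and yv: "y \<noteq> v"
  shows "(v - c) \<bullet> (y - c) < (v - c) \<bullet> (v - c)"
proof -
  define h where "h = v - c"
  have hr: "r * norm h < h \<bullet> h"
  proof -
    have "0 < norm (v - c)" using Vfar[OF v] r by linarith
    from mult_strict_right_mono[OF Vfar[OF v] this]
    have "r * norm h < norm h * norm h" by (simp add: h_def)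
    then show ?thesis by (simp add: norm_eq_sqrt_inner)
  qed
  let ?S = "cball c r \<union> (V - {v})"
  have hS: "\<forall>z\<in>?S. h \<bullet> z \<le> h \<bullet> c + r * norm h"
  proof
    fix z assume "z \<in> ?S"
    then show "h \<bullet> z \<le> h \<bullet> c + r * norm h"
    proof
      assume "z \<in> cball c r" then show ?thesis using cs_ball[of z h] by (simp add: inner_diff_right)
    next
      assume z: "z \<in> V - {v}"
      then have "h \<bullet> (z - c) \<le> r^2" using pair_orig[of v z] v by (auto simp: h_def)
      moreover have "r^2 \<le> r * norm h" using Vfar[OF v] r by (simp add: h_def power2_eq_square)
      ultimately show ?thesis by (simp add: inner_diff_right)
    qed
  qed
  have hull: "convex hull ?S \<subseteq> {z. h \<bullet> z \<le> h \<bullet> c + r * norm h}"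
    using hS by (intro hull_minimal convex_halfspace_le) auto
  have "K = convex hull (insert v ?S)" using v by (simp add: Kdef insert_absorb Un_insert_right[symmetric])
  moreover have "?S \<noteq> {}" using r by auto
  ultimately obtain u u' z where uz: "u \<ge> 0" "u' \<ge> 0" "u + u' = 1" "z \<in> convex hull ?S"
      "y = u *\<^sub>R v + u' *\<^sub>R z"
    using y convex_hull_insert[of ?S v] by auto
  have u'0: "u' > 0"
  proof (rule ccontr)
    assume "\<not> u' > 0" then have "u' = 0" using uz by auto
    then have "y = v" using uz by auto
    then show False using yv by simp
  qed
  have hz: "h \<bullet> (z - c) \<le> r * norm h" using hull uz(4) by (auto simp: inner_diff_right)
  have "u *\<^sub>R h + u' *\<^sub>R (z - c) = u *\<^sub>R v + u' *\<^sub>R z - (u + u') *\<^sub>R c"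
    by (simp add: h_def algebra_simps)
  also have "\<dots> = y - c" using uz(3,5) by simp
  finally have "y - c = u *\<^sub>R h + u' *\<^sub>R (z - c)" by simp
  then have "h \<bullet> (y - c) = u * (h \<bullet> h) + u' * (h \<bullet> (z - c))" by (simp add: inner_add_right)
  also have "\<dots> < u * (h \<bullet> h) + u' * (h \<bullet> h)"
  proof -
    have "u' * (h \<bullet> (z - c)) \<le> u' * (r * norm h)" using hz uz by (intro mult_left_mono) auto
    also have "\<dots> < u' * (h \<bullet> h)" using hr u'0 by simp
    finally show ?thesis by simp
  qed
  also have "\<dots> = (u + u') * (h \<bullet> h)" by (simp add: algebra_simps)
  also have "\<dots> = h \<bullet> h" using uz(3) by simp
  finally show ?thesis by (simp add: h_def)
qed

lemma extreme: "v \<in> V \<Longrightarrow> v extreme_point_of K"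
proof -
  assume v: "v \<in> V"
  have "\<not> v \<in> open_segment a b" if a: "a \<in> K" and b: "b \<in> K" for a b
  proof
    assume "v \<in> open_segment a b"
    then obtain u where u: "a \<noteq> b" "0 < u" "u < 1" "v = (1 - u) *\<^sub>R a + u *\<^sub>R b"
      by (auto simp: in_segment)
    have av: "a \<noteq> v"
    proof
      assume "a = v"
      then have "u *\<^sub>R (b - v) = ((1 - u) *\<^sub>R a + u *\<^sub>R b) - v" by (simp add: algebra_simps)
      also have "\<dots> = 0" using u(4) by simp
      finally have "b - v = 0" using u(2) by simp
      then show False using u(1) \<open>a = v\<close> by simp
    qed
    have bv: "b \<noteq> v"
    proof
      assume "b = v"
      then have "(1 - u) *\<^sub>R (a - v) = ((1 - u) *\<^sub>R a + u *\<^sub>R b) - v" by (simp add: algebra_simps)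
      also have "\<dots> = 0" using u(4) by simp
      finally have "a - v = 0" using u(3) by simp
      then show False using u(1) \<open>b = v\<close> by simp
    qed
    have ea: "(v - c) \<bullet> (a - c) < (v - c) \<bullet> (v - c)" by (rule exposed[OF v a av])
    have eb: "(v - c) \<bullet> (b - c) < (v - c) \<bullet> (v - c)" by (rule exposed[OF v b bv])
    have e: "v - c = (1 - u) *\<^sub>R (a - c) + u *\<^sub>R (b - c)" using u(4) by (simp add: algebra_simps)
    have "(v - c) \<bullet> (v - c) = (v - c) \<bullet> ((1 - u) *\<^sub>R (a - c) + u *\<^sub>R (b - c))"
      by (simp only: e[symmetric])
    also have "\<dots> = (1 - u) * ((v - c) \<bullet> (a - c)) + u * ((v - c) \<bullet> (b - c))"
      by (simp add: inner_add_right)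
    also have "\<dots> < (1 - u) * ((v - c) \<bullet> (v - c)) + u * ((v - c) \<bullet> (v - c))"
      using ea eb u by (intro add_strict_mono mult_strict_left_mono) auto
    finally show False by (simp add: algebra_simps)
  qed
  then show ?thesis using v V_in_K by (auto simp: extreme_point_of_def)
qed

lemma Vsym: "v \<in> V \<Longrightarrow> 2 *\<^sub>R c - v \<in> V"
proof -
  assume v: "v \<in> V"
  have symc: "\<forall>p\<in>K. 2 *\<^sub>R c - p \<in> K" using sym center by simp
  have "(2 *\<^sub>R c - v) extreme_point_of K"
    unfolding extreme_point_of_def
  proof (intro conjI ballI)
    show "2 *\<^sub>R c - v \<in> K" using symc v V_in_K by auto
    fix a b assume a: "a \<in> K" and b: "b \<in> K"
    show "2 *\<^sub>R c - v \<notin> open_segment a b"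
    proof
      assume "2 *\<^sub>R c - v \<in> open_segment a b"
      then obtain u where u: "a \<noteq> b" "0 < u" "u < 1" "2 *\<^sub>R c - v = (1 - u) *\<^sub>R a + u *\<^sub>R b"
        by (auto simp: in_segment)
      have "v = (1 - u) *\<^sub>R (2 *\<^sub>R c - a) + u *\<^sub>R (2 *\<^sub>R c - b)"
      proof -
        have "v = 2 *\<^sub>R c - ((1 - u) *\<^sub>R a + u *\<^sub>R b)" using u(4) by (simp add: algebra_simps)
        then show ?thesis by (simp add: algebra_simps)
      qed
      moreover have "2 *\<^sub>R c - a \<noteq> 2 *\<^sub>R c - b" using u(1) by simp
      ultimately have "v \<in> open_segment (2 *\<^sub>R c - a) (2 *\<^sub>R c - b)"
        using u(2,3) by (auto simp: in_segment)
      moreover have "2 *\<^sub>R c - a \<in> K" "2 *\<^sub>R c - b \<in> K" using symc a b by auto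
      ultimately show False using extreme[OF v] by (auto simp: extreme_point_of_def)
    qed
  qed
  then have "2 *\<^sub>R c - v \<in> cball c r \<union> V" using extreme_point_of_convex_hull Kdef by metis
  moreover have "2 *\<^sub>R c - v \<notin> cball c r"
  proof -
    have "c - (2 *\<^sub>R c - v) = v - c" by (simp add: vec_eq_iff)
    then have "dist c (2 *\<^sub>R c - v) = norm (v - c)" unfolding dist_norm by (rule arg_cong)
    then show ?thesis using Vfar[OF v] by simp
  qed
  ultimately show ?thesis by auto
qed

lemma Wsym: "\<forall>w\<in>W. -w \<in> W"
proof
  fix w assume "w \<in> W"
  then obtain v where v: "v \<in> V" "w = (1 / r) *\<^sub>R (v - c)" by (auto simp: W_def)
  have "-w = (1 / r) *\<^sub>R ((2 *\<^sub>R c - v) - c)" using v(2) r by (simp add: vec_eq_iff field_simps)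
  then show "-w \<in> W" using Vsym[OF v(1)] unfolding W_def by blast
qed

sublocale cW: capW W
  using W1 Wsym Wp by unfold_locales auto

end

lemma (in capW) bounded_W: "\<exists>M. \<forall>w\<in>W. w \<bullet> w \<le> M"
proof (cases "\<exists>w0\<in>W. w0 \<bullet> w0 > 3")
  case False then show ?thesis by (intro exI[of _ 3]) (auto simp: not_less)
next
  case True
  then obtain w0 where w0: "w0 \<in> W" "w0 \<bullet> w0 > 3" by blast
  have "w \<bullet> w \<le> w0 \<bullet> w0" if w: "w \<in> W" for w
  proof (rule ccontr)
    assume nle: "\<not> w \<bullet> w \<le> w0 \<bullet> w0"
    then have big: "w \<bullet> w > 3" using w0 by linarith
    have n1: "w \<noteq> w0" using nle by auto
    have n2: "w \<noteq> -w0" using nle by auto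
    have c2: "\<bar>w0 \<bullet> w\<bar> \<le> 1/2" using big_pair[OF w0(1) w] w0 big n1 n2 by auto
    have "(w0 \<bullet> w0 - 1) * (w \<bullet> w - 1) \<le> (1 - w0 \<bullet> w)^2" using Wp w0(1) w n1 by auto
    moreover have "2 * 2 < (w0 \<bullet> w0 - 1) * (w \<bullet> w - 1)"
      using w0 big by (intro mult_strict_mono) auto
    moreover have "(1 - w0 \<bullet> w)^2 \<le> (3/2)^2"
    proof -
      have "\<bar>1 - w0 \<bullet> w\<bar> \<le> \<bar>3/2\<bar>" using c2 by linarith
      then show ?thesis by (simp only: abs_le_square_iff)
    qed
    ultimately show False by (simp add: power2_eq_square)
  qed
  then show ?thesis by blast
qed

lemma convex3:
  assumes "convex C" "p1 \<in> C" "p2 \<in> C" "p3 \<in> C" "a1 \<ge> 0" "a2 \<ge> 0" "a3 \<ge> 0" "a1 + a2 + a3 = 1"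
  shows "a1 *\<^sub>R p1 + a2 *\<^sub>R p2 + a3 *\<^sub>R p3 \<in> C"
proof -
  have "convex hull {p1, p2, p3} \<subseteq> C" using assms by (intro hull_minimal) auto
  moreover have "a1 *\<^sub>R p1 + a2 *\<^sub>R p2 + a3 *\<^sub>R p3 \<in> convex hull {p1, p2, p3}"
    unfolding convex_hull_3 using assms by blast
  ultimately show ?thesis by blast
qed

context capK begin

definition "cap v = convex hull (insert v (cball c r))"

lemma cap_char:
  assumes "y \<in> cap v"
  shows "\<exists>\<mu> b. 0 \<le> \<mu> \<and> \<mu> \<le> 1 \<and> b \<in> cball c r \<and> y = (1 - \<mu>) *\<^sub>R v + \<mu> *\<^sub>R b"
proof -
  have ne: "cball c r \<noteq> {}" using r by auto
  have ch: "convex hull cball c r = cball c r" by (simp add: convex_hull_eq)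
  obtain u u' b where "u \<ge> 0" "u' \<ge> 0" "u + u' = 1" "b \<in> cball c r" "y = u *\<^sub>R v + u' *\<^sub>R b"
    using assms convex_hull_insert[OF ne, of v] ch unfolding cap_def by auto
  moreover then have "u = 1 - u'" by simp
  ultimately show ?thesis by (intro exI[of _ u'] exI[of _ b]) auto
qed

lemma cap_convex: "convex (cap v)" unfolding cap_def by simp

lemma ball_cap: "cball c r \<subseteq> cap v" and v_cap: "v \<in> cap v"
  unfolding cap_def by (auto intro: hull_inc)

lemma two_vertex:
  assumes v: "v \<in> V" and w: "w \<in> V" and vw: "v \<noteq> w" and b: "b \<in> cball c r"
    and al: "\<alpha> \<ge> 0" and be: "\<beta> \<ge> 0" and ga: "\<gamma> \<ge> 0" and s1: "\<alpha> + \<beta> + \<gamma> = 1"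
  shows "\<alpha> *\<^sub>R v + \<beta> *\<^sub>R w + \<gamma> *\<^sub>R b \<in> cap v \<union> cap w"
proof -
  obtain m where m: "m \<in> closed_segment v w" "m \<in> cball c r" using seg v w vw by blast
  then obtain s where s: "0 \<le> s" "s \<le> 1" "m = (1 - s) *\<^sub>R v + s *\<^sub>R w" by (auto simp: in_segment)
  have s0: "s \<noteq> 0" using s m(2) v Vout by auto
  have s1': "s \<noteq> 1" using s m(2) w Vout by auto
  have sp: "0 < s" "s < 1" using s s0 s1' by auto
  show ?thesis
  proof (cases "\<beta> * (1 - s) \<le> \<alpha> * s")
    case True
    define a1 where "a1 = \<alpha> - \<beta> * (1 - s) / s"
    define a2 where "a2 = \<beta> / s"
    have a1: "a1 \<ge> 0" using True sp by (simp add: a1_def pos_divide_le_eq)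
    have a2: "a2 \<ge> 0" using be sp by (simp add: a2_def)
    have "a1 + a2 = \<alpha> + \<beta>" using sp by (simp add: a1_def a2_def field_simps)
    then have sum: "a1 + a2 + \<gamma> = 1" using s1 by linarith
    have eq: "\<alpha> *\<^sub>R v + \<beta> *\<^sub>R w + \<gamma> *\<^sub>R b = a1 *\<^sub>R v + a2 *\<^sub>R m + \<gamma> *\<^sub>R b"
      using sp unfolding s(3) a1_def a2_def by (simp add: vec_eq_iff field_simps)
    have "a1 *\<^sub>R v + a2 *\<^sub>R m + \<gamma> *\<^sub>R b \<in> cap v"
      using convex3[OF cap_convex v_cap _ _ a1 a2 ga sum] ball_cap m(2) b by blast
    then show ?thesis using eq by simp
  next
    case False
    define a1 where "a1 = \<beta> - \<alpha> * s / (1 - s)"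
    define a2 where "a2 = \<alpha> / (1 - s)"
    have a1: "a1 \<ge> 0" using False sp by (simp add: a1_def pos_divide_le_eq)
    have a2: "a2 \<ge> 0" using al sp by (simp add: a2_def)
    have "\<alpha> / (1 - s) - \<alpha> * s / (1 - s) = \<alpha> * (1 - s) / (1 - s)"
      by (simp add: diff_divide_distrib[symmetric] algebra_simps)
    also have "\<dots> = \<alpha>" using sp by simp
    finally have "a1 + a2 = \<alpha> + \<beta>" by (simp add: a1_def a2_def)
    then have sum: "a1 + a2 + \<gamma> = 1" using s1 by linarith
    have mq: "a2 *\<^sub>R m = \<alpha> *\<^sub>R v + (\<alpha> * s / (1 - s)) *\<^sub>R w"
      using sp unfolding s(3) a2_def by (simp add: scaleR_add_right)
    have eq: "\<alpha> *\<^sub>R v + \<beta> *\<^sub>R w + \<gamma> *\<^sub>R b = a1 *\<^sub>R w + a2 *\<^sub>R m + \<gamma> *\<^sub>R b"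
      unfolding mq a1_def by (simp add: algebra_simps)
    have "a1 *\<^sub>R w + a2 *\<^sub>R m + \<gamma> *\<^sub>R b \<in> cap w"
      using convex3[OF cap_convex v_cap _ _ a1 a2 ga sum] ball_cap m(2) b by blast
    then show ?thesis using eq by simp
  qed
qed

definition "Sc = cball c r \<union> (\<Union>v\<in>V. cap v)"

lemma Sc_convex: "convex Sc"
proof (rule convexI)
  fix y1 y2 :: "real^3" and u u' :: real assume y1: "y1 \<in> Sc" and y2: "y2 \<in> Sc" and u: "0 \<le> u" "0 \<le> u'" "u + u' = 1"
  show "u *\<^sub>R y1 + u' *\<^sub>R y2 \<in> Sc"
  proof (cases "y1 \<in> cball c r")
    case y1b: True
    show ?thesis
    proof (cases "y2 \<in> cball c r")
      case True
      then have "u *\<^sub>R y1 + u' *\<^sub>R y2 \<in> cball c r"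
        using y1b u convex_cball[of c r] unfolding convex_def by blast
      then show ?thesis by (simp add: Sc_def)
    next
      case False
      then obtain w where w: "w \<in> V" "y2 \<in> cap w" using y2 by (auto simp: Sc_def)
      have "y1 \<in> cap w" using y1b ball_cap[of w] by blast
      then have "u *\<^sub>R y1 + u' *\<^sub>R y2 \<in> cap w" using w cap_convex[of w] u unfolding convex_def by blast
      then show ?thesis using w by (auto simp: Sc_def)
    qed
  next
    case False
    then obtain v where v: "v \<in> V" "y1 \<in> cap v" using y1 by (auto simp: Sc_def)
    show ?thesis
    proof (cases "y2 \<in> cball c r")
      case True
      have "y2 \<in> cap v" using True ball_cap[of v] by blast
      then have "u *\<^sub>R y1 + u' *\<^sub>R y2 \<in> cap v" using v cap_convex[of v] u unfolding convex_def by blast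
      then show ?thesis using v by (auto simp: Sc_def)
    next
      case False
      then obtain w where w: "w \<in> V" "y2 \<in> cap w" using y2 by (auto simp: Sc_def)
      show ?thesis
      proof (cases "v = w")
        case True
        then have "u *\<^sub>R y1 + u' *\<^sub>R y2 \<in> cap v" using v w cap_convex[of v] u unfolding convex_def by blast
        then show ?thesis using v by (auto simp: Sc_def)
      next
        case vw: False
        obtain m1 b1 where r1: "0 \<le> m1" "m1 \<le> 1" "b1 \<in> cball c r" "y1 = (1 - m1) *\<^sub>R v + m1 *\<^sub>R b1"
          using cap_char[OF v(2)] by blast
        obtain m2 b2 where r2: "0 \<le> m2" "m2 \<le> 1" "b2 \<in> cball c r" "y2 = (1 - m2) *\<^sub>R w + m2 *\<^sub>R b2"
          using cap_char[OF w(2)] by blast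
        define g where "g = u * m1 + u' * m2"
        define b where "b = (if g = 0 then c else (u * m1 / g) *\<^sub>R b1 + (u' * m2 / g) *\<^sub>R b2)"
        have g0: "g \<ge> 0" using u r1 r2 by (simp add: g_def)
        have bb: "b \<in> cball c r"
        proof (cases "g = 0")
          case True then show ?thesis using r by (simp add: b_def)
        next
          case False
          then have "g > 0" using g0 by simp
          have "(u * m1 / g) + (u' * m2 / g) = 1" using False by (simp add: g_def add_divide_distrib[symmetric])
          moreover have "u * m1 / g \<ge> 0" "u' * m2 / g \<ge> 0" using u r1 r2 g0 by auto
          ultimately show ?thesis using False r1(3) r2(3) convex_cball[of c r]
            unfolding convex_def b_def by auto
        qed
        have gb: "(u * m1) *\<^sub>R b1 + (u' * m2) *\<^sub>R b2 = g *\<^sub>R b"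
        proof (cases "g = 0")
          case True
          have h1: "u * m1 = 0" and h2: "u' * m2 = 0" using u r1 r2 True unfolding g_def
            by (auto simp: add_nonneg_eq_0_iff)
          show ?thesis by (simp only: h1 h2 True scaleR_zero_left add_0_left)
        next
          case False then show ?thesis by (simp add: b_def scaleR_add_right)
        qed
        have eq: "u *\<^sub>R y1 + u' *\<^sub>R y2 = (u * (1 - m1)) *\<^sub>R v + (u' * (1 - m2)) *\<^sub>R w + g *\<^sub>R b"
          unfolding r1(4) r2(4) gb[symmetric] by (simp add: algebra_simps)
        have "(u * (1 - m1)) *\<^sub>R v + (u' * (1 - m2)) *\<^sub>R w + g *\<^sub>R b \<in> cap v \<union> cap w"
        proof -
          have p1: "u * (1 - m1) \<ge> 0" using u r1 by simp
          have p2: "u' * (1 - m2) \<ge> 0" using u r2 by simp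
          have p3: "u * (1 - m1) + u' * (1 - m2) + g = 1" using u(3) by (simp add: g_def algebra_simps)
          show ?thesis by (rule two_vertex[OF v(1) w(1) vw bb p1 p2 g0 p3])
        qed
        then show ?thesis using eq v w by (auto simp: Sc_def)
      qed
    qed
  qed
qed

lemma K_Sc: "K \<subseteq> Sc"
  unfolding Kdef using Sc_convex v_cap by (intro hull_minimal) (auto simp: Sc_def)

lemma caps:
  assumes "p \<in> K" "dist c p > r"
  shows "\<exists>v\<in>V. \<exists>\<mu> b. 0 \<le> \<mu> \<and> \<mu> < 1 \<and> b \<in> cball c r \<and> p = (1 - \<mu>) *\<^sub>R v + \<mu> *\<^sub>R b"
proof -
  have "p \<in> Sc" using assms K_Sc by auto
  moreover have "p \<notin> cball c r" using assms by simp
  ultimately obtain v where v: "v \<in> V" "p \<in> cap v" by (auto simp: Sc_def)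
  then obtain \<mu> b where mb: "0 \<le> \<mu>" "\<mu> \<le> 1" "b \<in> cball c r" "p = (1 - \<mu>) *\<^sub>R v + \<mu> *\<^sub>R b"
    using cap_char by blast
  have "\<mu> \<noteq> 1" using mb assms by auto
  then show ?thesis using v mb by (intro bexI[of _ v] exI[of _ \<mu>] exI[of _ b]) auto
qed

lemma closV: "closure V \<subseteq> V \<union> cball c r"
proof
  fix x assume x: "x \<in> closure V"
  show "x \<in> V \<union> cball c r"
  proof (rule ccontr)
    assume nx: "x \<notin> V \<union> cball c r"
    then have lim: "x islimpt V" using x by (auto simp: closure_def)
    define e where "e = (dist c x - r) / 2"
    have e0: "e > 0" using nx by (simp add: e_def)
    obtain v where v: "v \<in> V" "v \<noteq> x" "dist v x < e" using lim e0 by (auto simp: islimpt_approachable)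
    have "min e (dist v x) > 0" using e0 v by simp
    from lim[unfolded islimpt_approachable, rule_format, OF this]
    obtain w where w: "w \<in> V" "w \<noteq> x" "dist w x < min e (dist v x)" by blast
    have vw: "v \<noteq> w" using w by auto
    have "closed_segment v w \<subseteq> ball x e"
      using v w by (intro closed_segment_subset) (auto simp: dist_commute)
    moreover obtain y where "y \<in> closed_segment v w" "y \<in> cball c r" using seg v(1) w(1) vw by blast
    ultimately have y: "dist x y < e" "dist c y \<le> r" by auto
    have "dist c x \<le> dist c y + dist y x" by (rule dist_triangle)
    then show False using y e0 by (simp add: e_def dist_commute)
  qed
qed

end

context capKs begin

lemma bounded_V: "bounded V"
proof -
  obtain M where M: "\<forall>w\<in>W. w \<bullet> w \<le> M" using cW.bounded_W by blast
  have "V \<subseteq> cball c (r * M)"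
  proof
    fix v assume v: "v \<in> V"
    define w where "w = (1 / r) *\<^sub>R (v - c)"
    have w: "w \<in> W" unfolding W_def w_def using v by blast
    have "norm w > 1" using W1 w by (metis inner_real_def norm_eq_sqrt_inner norm_ge_zero real_sqrt_gt_1_iff
      less_le_not_le norm_le_square not_less)
    then have "norm w * 1 \<le> norm w * norm w" by (intro mult_left_mono) auto
    then have "norm w \<le> norm w * norm w" by simp
    also have "\<dots> = w \<bullet> w" by (simp add: norm_eq_sqrt_inner)
    also have "\<dots> \<le> M" using M w by auto
    finally have "norm w \<le> M" .
    moreover have "norm (v - c) = r * norm w" using r by (simp add: w_def)
    ultimately have "norm (v - c) \<le> r * M" using r by (simp add: mult_left_mono)
    then show "v \<in> cball c (r * M)" by (simp add: dist_norm norm_minus_commute)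
  qed
  then show ?thesis by (rule bounded_subset[OF bounded_cball])
qed

lemma closed_K: "closed K"
proof -
  let ?S = "cball c r \<union> V"
  have "closure ?S \<subseteq> ?S" using closV by auto
  then have "closed ?S" using closure_subset_eq by blast
  moreover have "bounded ?S" using bounded_V by simp
  ultimately have "compact ?S" by (simp add: compact_eq_bounded_closed)
  then have "compact K" unfolding Kdef by (rule compact_convex_hull)
  then show ?thesis by (rule compact_imp_closed)
qed

end

lemma pick_sign:
  fixes f q :: "real^3"
  assumes "f \<bullet> f = 1" "f \<bullet> q \<noteq> 0"
  shows "\<exists>u\<in>{f, -f}. u \<bullet> u = 1 \<and> u \<bullet> q < 0 \<and> (u \<bullet> q)^2 = (f \<bullet> q)^2"
proof (cases "f \<bullet> q < 0")
  case True then show ?thesis using assms by auto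
next
  case False
  then have "(-f) \<bullet> q < 0" using assms by simp
  then show ?thesis using assms by (intro bexI[of _ "-f"]) auto
qed

lemma ray:
  fixes q u :: "real^3"
  assumes "u \<bullet> u = 1"
  shows "(q + (-(u \<bullet> q)) *\<^sub>R u) \<bullet> (q + (-(u \<bullet> q)) *\<^sub>R u) = q \<bullet> q - (u \<bullet> q)^2"
proof -
  have "(q + (-(u \<bullet> q)) *\<^sub>R u) \<bullet> (q + (-(u \<bullet> q)) *\<^sub>R u)
      = q \<bullet> q - 2 * (u \<bullet> q) * (u \<bullet> q) + (u \<bullet> q) * (u \<bullet> q) * (u \<bullet> u)"
    by (simp add: inner_add_left inner_add_right algebra_simps inner_commute)
  also have "\<dots> = q \<bullet> q - (u \<bullet> q)^2" using assms by (simp add: power2_eq_square)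
  finally show ?thesis .
qed

context capK begin

lemma illum_sphere:
  assumes "dist c p = r" "u \<bullet> u = 1" "u \<bullet> (p - c) < 0"
  shows "illuminates K u p"
proof -
  define q where "q = p - c"
  define t where "t = - (u \<bullet> q)"
  have t: "t > 0" using assms by (simp add: t_def q_def)
  have "(q + t *\<^sub>R u) \<bullet> (q + t *\<^sub>R u) = q \<bullet> q - (u \<bullet> q)^2" unfolding t_def by (rule ray[OF assms(2)])
  also have "\<dots> < q \<bullet> q" using assms(3) by (simp add: q_def)
  finally have "norm (q + t *\<^sub>R u) < norm q"
    by (simp add: norm_eq_sqrt_inner)
  moreover have "norm q = r" using assms(1) by (simp add: q_def dist_norm norm_minus_commute)
  moreover have "q + t *\<^sub>R u = (p + t *\<^sub>R u) - c" by (simp add: q_def algebra_simps)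
  ultimately have "p + t *\<^sub>R u \<in> ball c r" by (simp add: dist_norm norm_minus_commute)
  then show ?thesis using ball_interior t unfolding illuminates_def by blast
qed

lemma illum_cap:
  assumes mu: "0 \<le> \<mu>" "\<mu> < 1" and b: "b \<in> cball c r" and p: "p = (1 - \<mu>) *\<^sub>R v + \<mu> *\<^sub>R b"
    and hit: "norm ((1 / r) *\<^sub>R (v - c) + t *\<^sub>R u) < 1" and t: "t > 0"
  shows "illuminates K u p"
proof -
  define T where "T = (1 - \<mu>) * r * t"
  have T: "T > 0" using mu r t by (simp add: T_def)
  define z where "z = (1 / r) *\<^sub>R (v - c) + t *\<^sub>R u"
  have e: "p + T *\<^sub>R u - c = ((1 - \<mu>) * r) *\<^sub>R z + \<mu> *\<^sub>R (b - c)"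
    using r unfolding p T_def z_def by (simp add: vec_eq_iff field_simps)
  have "norm (p + T *\<^sub>R u - c) \<le> norm (((1 - \<mu>) * r) *\<^sub>R z) + norm (\<mu> *\<^sub>R (b - c))"
    unfolding e by (rule norm_triangle_ineq)
  also have "\<dots> = ((1 - \<mu>) * r) * norm z + \<mu> * norm (b - c)" using mu r by simp
  also have "\<dots> < ((1 - \<mu>) * r) * 1 + \<mu> * r"
  proof -
    have "((1 - \<mu>) * r) * norm z < ((1 - \<mu>) * r) * 1"
      using hit mu r unfolding z_def by (intro mult_strict_left_mono) auto
    moreover have "\<mu> * norm (b - c) \<le> \<mu> * r"
      using b mu by (intro mult_left_mono) (auto simp: dist_norm norm_minus_commute)
    ultimately show ?thesis by linarith
  qed
  also have "\<dots> = r" by (simp add: algebra_simps)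
  finally have "p + T *\<^sub>R u \<in> ball c r" by (simp add: dist_norm norm_minus_commute)
  then show ?thesis using ball_interior T unfolding illuminates_def by blast
qed

end

context capKs begin

lemma illum_all:
  assumes good: "cW.good f1 f2 f3"
  shows "\<forall>p\<in>frontier K. \<exists>u\<in>{f1, -f1, f2, -f2, f3, -f3}. illuminates K u p"
proof
  fix p assume pf: "p \<in> frontier K"
  have pK: "p \<in> K" using pf closed_K frontier_subset_closed by blast
  have "p \<notin> interior K" using pf by (simp add: frontier_def)
  then have "p \<notin> ball c r" using ball_interior by blast
  then have pr: "dist c p \<ge> r" by simp
  have unit: "f1 \<bullet> f1 = 1" "f2 \<bullet> f2 = 1" "f3 \<bullet> f3 = 1"
    and pars: "\<forall>y. (f1 \<bullet> y)^2 + (f2 \<bullet> y)^2 + (f3 \<bullet> y)^2 = y \<bullet> y"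
    and cov: "\<forall>w\<in>W. (f1 \<bullet> w)^2 > w \<bullet> w - 1 \<or> (f2 \<bullet> w)^2 > w \<bullet> w - 1 \<or> (f3 \<bullet> w)^2 > w \<bullet> w - 1"
    using good unfolding cW.good_def by auto
  have pick: "\<exists>u\<in>{f1, -f1, f2, -f2, f3, -f3}. u \<bullet> u = 1 \<and> u \<bullet> q < 0 \<and> (u \<bullet> q)^2 > m"
    if m0: "m \<ge> 0" and h: "(f1 \<bullet> q)^2 > m \<or> (f2 \<bullet> q)^2 > m \<or> (f3 \<bullet> q)^2 > m" for q m
  proof -
    from h show ?thesis
    proof (elim disjE)
      assume a: "(f1 \<bullet> q)^2 > m"
      then have "f1 \<bullet> q \<noteq> 0" using m0 by auto
      then show ?thesis using pick_sign[OF unit(1), of q] a by auto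
    next
      assume a: "(f2 \<bullet> q)^2 > m"
      then have "f2 \<bullet> q \<noteq> 0" using m0 by auto
      then show ?thesis using pick_sign[OF unit(2), of q] a by auto
    next
      assume a: "(f3 \<bullet> q)^2 > m"
      then have "f3 \<bullet> q \<noteq> 0" using m0 by auto
      then show ?thesis using pick_sign[OF unit(3), of q] a by auto
    qed
  qed
  show "\<exists>u\<in>{f1, -f1, f2, -f2, f3, -f3}. illuminates K u p"
  proof (cases "dist c p = r")
    case True
    define q where "q = p - c"
    have "q \<noteq> 0" using True r by (auto simp: q_def)
    then have qq: "q \<bullet> q > 0" by simp
    have "(f1 \<bullet> q)^2 > 0 \<or> (f2 \<bullet> q)^2 > 0 \<or> (f3 \<bullet> q)^2 > 0"
    proof (rule ccontr)
      assume "\<not> ?thesis"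
      then have "(f1 \<bullet> q)^2 \<le> 0" "(f2 \<bullet> q)^2 \<le> 0" "(f3 \<bullet> q)^2 \<le> 0" by auto
      then show False using pars[rule_format, of q] qq by linarith
    qed
    from pick[OF order_refl this]
    obtain u where u: "u \<in> {f1, -f1, f2, -f2, f3, -f3}" "u \<bullet> u = 1" "u \<bullet> q < 0"
      by blast
    show ?thesis using u(1) illum_sphere[OF True u(2) u(3)[unfolded q_def]] by blast
  next
    case False
    then have "dist c p > r" using pr by simp
    then obtain v \<mu> b where vb: "v \<in> V" "0 \<le> \<mu>" "\<mu> < 1" "b \<in> cball c r" "p = (1 - \<mu>) *\<^sub>R v + \<mu> *\<^sub>R b"
      using caps[OF pK] by blast
    define w where "w = (1 / r) *\<^sub>R (v - c)"
    have w: "w \<in> W" unfolding W_def w_def using vb(1) by blast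
    have w1: "w \<bullet> w > 1" using W1 w by auto
    have m0: "0 \<le> w \<bullet> w - 1" using w1 by simp
    have dj: "(f1 \<bullet> w)^2 > w \<bullet> w - 1 \<or> (f2 \<bullet> w)^2 > w \<bullet> w - 1 \<or> (f3 \<bullet> w)^2 > w \<bullet> w - 1"
      using cov w by blast
    from pick[OF m0 dj]
    obtain u where u: "u \<in> {f1, -f1, f2, -f2, f3, -f3}" "u \<bullet> u = 1" "u \<bullet> w < 0"
      "(u \<bullet> w)^2 > w \<bullet> w - 1" by blast
    define t where "t = - (u \<bullet> w)"
    have t: "t > 0" using u by (simp add: t_def)
    have "(w + t *\<^sub>R u) \<bullet> (w + t *\<^sub>R u) = w \<bullet> w - (u \<bullet> w)^2" unfolding t_def by (rule ray[OF u(2)])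
    also have "\<dots> < 1" using u(4) by simp
    finally have "norm (w + t *\<^sub>R u) < 1" by (simp add: norm_eq_sqrt_inner)
    then have "illuminates K u p" using illum_cap[OF vb(2) vb(3) vb(4) vb(5) _ t] unfolding w_def by blast
    then show ?thesis using u(1) by blast
  qed
qed

lemma exU: "\<exists>U. finite U \<and> card U \<le> 6 \<and> U \<subseteq> sphere 0 1 \<and>
      (\<forall>p\<in>frontier K. \<exists>u\<in>U. illuminates K u p)"
proof -
  obtain f1 f2 f3 where good: "cW.good f1 f2 f3" using cW.core by blast
  define U where "U = {f1, -f1, f2, -f2, f3, -f3}"
  have unit: "f1 \<bullet> f1 = 1" "f2 \<bullet> f2 = 1" "f3 \<bullet> f3 = 1" using good unfolding cW.good_def by auto
  have "norm f1 = 1" "norm f2 = 1" "norm f3 = 1" using unit by (auto simp: norm_eq_sqrt_inner)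
  then have sph: "U \<subseteq> sphere 0 1" by (auto simp: U_def)
  have fin: "finite U" by (simp add: U_def)
  have "U = set [f1, -f1, f2, -f2, f3, -f3]" by (simp add: U_def)
  then have card: "card U \<le> 6" using card_length[of "[f1, -f1, f2, -f2, f3, -f3]"] by simp
  show ?thesis using fin sph card illum_all[OF good] unfolding U_def by blast
qed

end

lemma least_from_U:
  assumes "finite U" "U \<subseteq> sphere 0 1" "\<forall>p\<in>frontier K. \<exists>u\<in>U. illuminates K u p"
  shows "illumination_number K \<le> card U"
proof -
  have "\<exists>U'. finite U' \<and> card U' = card U \<and> U' \<subseteq> sphere 0 1 \<and>
      (\<forall>p\<in>frontier K. \<exists>u\<in>U'. illuminates K u p)"
    using assms by blast
  then show ?thesis unfolding illumination_number_def by (rule Least_le)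
qed

theorem part1_ex:
  fixes K :: "(real^3) set"
  assumes "cap_body K" "centrally_symmetric K"
  shows "\<exists>U. finite U \<and> card U \<le> 6 \<and> U \<subseteq> sphere 0 1 \<and>
      (\<forall>p\<in>frontier K. \<exists>u\<in>U. illuminates K u p)"
proof -
  obtain c r V where h: "r > 0" "countable V" "V \<inter> cball c r = {}"
    "\<forall>v\<in>V. \<forall>w\<in>V. v \<noteq> w \<longrightarrow> closed_segment v w \<inter> cball c r \<noteq> {}"
    "K = convex hull (cball c r \<union> V)"
    using assms(1) unfolding cap_body_def by blast
  obtain x where x: "\<forall>p\<in>K. 2 *\<^sub>R x - p \<in> K" using assms(2) unfolding centrally_symmetric_def by blast
  interpret capKs c r V K x
    using h x by unfold_locales auto
  show ?thesis by (rule exU)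
qed

theorem part1:
  fixes K :: "(real^3) set"
  assumes "cap_body K" "centrally_symmetric K"
  shows "illumination_number K \<le> 6"
  using part1_ex[OF assms] least_from_U by (meson order_trans)

definition r0 :: real where "r0 = sqrt (1/2)"
definition V0 :: "(real^3) set" where "V0 = {axis k s | k s. s = 1 \<or> s = -1}"
definition K0 :: "(real^3) set" where "K0 = convex hull (cball 0 r0 \<union> V0)"

lemma r0: "r0 > 0" "r0^2 = 1/2" "r0 < 1"
  by (auto simp: r0_def)

lemma sgn_cases: "s = 1 \<or> s = -1 \<Longrightarrow> s * s = (1::real)" by auto

lemma axis_comp: "(axis k s :: real^3) $ i = (if i = k then s else 0)"
  by (simp add: axis_def)

lemma V0_img: "V0 = (\<lambda>(k, s). axis k s) ` (UNIV \<times> {1, -1})"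
  by (auto simp: V0_def)

lemma V0_norm: "y \<in> V0 \<Longrightarrow> norm y = 1"
proof -
  assume "y \<in> V0"
  then obtain k s where ks: "s = 1 \<or> s = -1" "y = axis k s" by (auto simp: V0_def)
  then have "y \<bullet> y = 1" by (auto simp: inner_axis_axis)
  then show "norm y = 1" by (simp add: norm_eq_sqrt_inner)
qed

lemma card_V0: "card V0 = 6"
proof -
  have "inj_on (\<lambda>(k, s). axis k s :: real^3) (UNIV \<times> {1, -1})"
    by (auto simp: inj_on_def axis_eq_axis)
  then have "card V0 = card (UNIV \<times> {1, -1::real} :: (3 \<times> real) set)"
    unfolding V0_img by (rule card_image)
  also have "\<dots> = 6" by (simp add: card_cartesian_product)
  finally show ?thesis .
qed

lemma ex_other: "\<exists>j::3. j \<noteq> k"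
  using exhaust_3[of k] by (metis num1_eq1 one_neq_zero zero_neq_one exhaust_3 numeral_One)

lemma cap_body_K0: "cap_body K0"
  unfolding cap_body_def
proof (intro exI conjI)
  show "r0 > 0" by (rule r0(1))
  show "countable V0" unfolding V0_img by simp
  show "V0 \<inter> cball 0 r0 = {}" using V0_norm r0(3) by fastforce
  show "K0 = convex hull (cball 0 r0 \<union> V0)" by (simp add: K0_def)
  show "\<forall>v\<in>V0. \<forall>w\<in>V0. v \<noteq> w \<longrightarrow> closed_segment v w \<inter> cball 0 r0 \<noteq> {}"
  proof (intro ballI impI)
    fix v w assume v: "v \<in> V0" and w: "w \<in> V0" and vw: "v \<noteq> w"
    obtain k s where ks: "s = 1 \<or> s = -1" "v = axis k s" using v by (auto simp: V0_def)
    obtain k' s' where ks': "s' = 1 \<or> s' = -1" "w = axis k' s'" using w by (auto simp: V0_def)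
    define m where "m = (1 - 1/2) *\<^sub>R v + (1/2) *\<^sub>R w"
    have ms: "m \<in> closed_segment v w" unfolding m_def in_segment by (intro exI[of _ "1/2"]) auto
    have mm: "m \<bullet> m \<le> 1/2"
    proof (cases "k = k'")
      case True
      then have "s \<noteq> s'" using vw ks ks' by auto
      then have "s' = - s" using ks ks' by auto
      then have "m = 0" using True ks ks' unfolding m_def by (simp add: vec_eq_iff axis_def)
      then show ?thesis by simp
    next
      case False
      have "m \<bullet> m = (1/4) * (v \<bullet> v) + (1/2) * (v \<bullet> w) + (1/4) * (w \<bullet> w)"
        unfolding m_def by (simp add: inner_add_left inner_add_right inner_commute algebra_simps)
      also have "\<dots> = 1/2" using False ks ks' by (auto simp: inner_axis_axis)
      finally show ?thesis by simp
    qed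
    have "norm m \<le> r0" unfolding r0_def norm_eq_sqrt_inner using mm by simp
    then have "m \<in> cball 0 r0" by simp
    then show "closed_segment v w \<inter> cball 0 r0 \<noteq> {}" using ms by blast
  qed
qed

lemma neg_closed_image:
  fixes S :: "(real^3) set"
  assumes "\<And>y. y \<in> S \<Longrightarrow> -y \<in> S"
  shows "(\<lambda>x. (-1) *\<^sub>R x) ` S = S"
proof
  show "(\<lambda>x. (-1) *\<^sub>R x) ` S \<subseteq> S" using assms by auto
  show "S \<subseteq> (\<lambda>x. (-1) *\<^sub>R x) ` S"
  proof
    fix y assume "y \<in> S"
    then have "-y \<in> S" by (rule assms)
    moreover have "y = (-1) *\<^sub>R (-y)" by simp
    ultimately show "y \<in> (\<lambda>x. (-1) *\<^sub>R x) ` S" by blast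
  qed
qed

lemma sym_K0: "centrally_symmetric K0"
  unfolding centrally_symmetric_def
proof (intro exI[of _ 0] ballI)
  fix p assume p: "p \<in> K0"
  let ?S = "cball 0 r0 \<union> V0"
  have "\<And>y. y \<in> ?S \<Longrightarrow> -y \<in> ?S"
  proof -
    fix y assume "y \<in> ?S"
    then show "-y \<in> ?S"
    proof
      assume "y \<in> cball 0 r0" then show ?thesis by simp
    next
      assume "y \<in> V0"
      then obtain k s where ks: "s = 1 \<or> s = -1" "y = axis k s" by (auto simp: V0_def)
      then have e: "-y = axis k (-s)" by (simp add: vec_eq_iff axis_def)
      have "-s = 1 \<or> -s = -1" using ks by auto
      then have "-y \<in> V0" unfolding V0_def e by blast
      then show ?thesis by simp
    qed
  qed
  then have img: "(\<lambda>x. (-1) *\<^sub>R x) ` ?S = ?S" by (rule neg_closed_image)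
  have "(-1) *\<^sub>R p \<in> (\<lambda>x. (-1) *\<^sub>R x) ` K0" using p by blast
  also have "\<dots> = convex hull ((\<lambda>x. (-1) *\<^sub>R x) ` ?S)" unfolding K0_def by (rule convex_hull_scaling[symmetric])
  also have "\<dots> = K0" unfolding img K0_def ..
  finally show "2 *\<^sub>R 0 - p \<in> K0" by simp
qed

lemma sq2: "(X + a)^2 \<le> 2 * (X * X + a * (a::real))"
proof -
  have "0 \<le> (X - a)^2" by simp
  then show ?thesis by (simp add: power2_eq_square algebra_simps)
qed

lemma K0_cone:
  assumes y: "y \<in> K0" and s: "s = 1 \<or> s = -1" and jk: "j \<noteq> k"
  shows "s * y $ k + \<bar>y $ j\<bar> \<le> 1"
proof -
  define C where "C = {y :: real^3. s * y $ k + \<bar>y $ j\<bar> \<le> 1}"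
  have cC: "convex C"
  proof (rule convexI)
    fix a b :: "real^3" and u v :: real
    assume a: "a \<in> C" and b: "b \<in> C" and u: "0 \<le> u" "0 \<le> v" "u + v = 1"
    have "\<bar>u * a $ j + v * b $ j\<bar> \<le> u * \<bar>a $ j\<bar> + v * \<bar>b $ j\<bar>"
      using u by (metis abs_mult abs_of_nonneg abs_triangle_ineq)
    moreover have "u * (s * a $ k + \<bar>a $ j\<bar>) \<le> u * 1" using a u by (intro mult_left_mono) (auto simp: C_def)
    moreover have "v * (s * b $ k + \<bar>b $ j\<bar>) \<le> v * 1" using b u by (intro mult_left_mono) (auto simp: C_def)
    ultimately have "s * (u * a $ k + v * b $ k) + \<bar>u * a $ j + v * b $ j\<bar> \<le> u + v"
      by (simp add: algebra_simps)
    then show "u *\<^sub>R a + v *\<^sub>R b \<in> C" using u by (simp add: C_def)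
  qed
  have sub: "cball 0 r0 \<union> V0 \<subseteq> C"
  proof
    fix z assume "z \<in> cball 0 r0 \<union> V0"
    then show "z \<in> C"
    proof
      assume "z \<in> cball 0 r0"
      then have "norm z \<le> r0" by simp
      then have "(norm z)^2 \<le> r0^2" by (simp add: power_mono)
      then have zz: "z \<bullet> z \<le> 1/2" using r0(2) by (simp add: power2_norm_eq_inner)
      have "(\<Sum>i\<in>{k, j}. z $ i * z $ i) \<le> (\<Sum>i\<in>UNIV. z $ i * z $ i)"
        by (intro sum_mono2) auto
      then have "z $ k * z $ k + z $ j * z $ j \<le> z \<bullet> z" using jk by (simp add: inner_vec_def)
      moreover have "(s * z $ k + \<bar>z $ j\<bar>)^2 \<le> 2 * (z $ k * z $ k + z $ j * z $ j)"
      proof -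
        have "(s * z $ k + \<bar>z $ j\<bar>)^2 \<le> 2 * ((s * z $ k) * (s * z $ k) + \<bar>z $ j\<bar> * \<bar>z $ j\<bar>)"
          by (rule sq2)
        moreover have "(s * z $ k) * (s * z $ k) = z $ k * z $ k"
        proof -
          have "(s * z $ k) * (s * z $ k) = (s * s) * (z $ k * z $ k)" by (simp add: algebra_simps)
          then show ?thesis using s by auto
        qed
        moreover have "\<bar>z $ j\<bar> * \<bar>z $ j\<bar> = z $ j * z $ j" by (simp add: abs_mult_self_eq)
        ultimately show ?thesis by simp
      qed
      ultimately have "(s * z $ k + \<bar>z $ j\<bar>)^2 \<le> 1^2" using zz by simp
      then have "s * z $ k + \<bar>z $ j\<bar> \<le> 1" by (rule power2_le_imp_le) simp
      then show ?thesis by (simp add: C_def)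
    next
      assume "z \<in> V0"
      then obtain k' s' where ks: "s' = 1 \<or> s' = -1" "z = axis k' s'" by (auto simp: V0_def)
      show ?thesis using ks s jk by (auto simp: C_def axis_comp)
    qed
  qed
  have "K0 \<subseteq> C" unfolding K0_def using sub cC by (rule hull_minimal)
  then show ?thesis using y by (auto simp: C_def)
qed

lemma K0_int:
  assumes y: "y \<in> interior K0" and s: "s = 1 \<or> s = -1" and jk: "j \<noteq> k"
  shows "s * y $ k + \<bar>y $ j\<bar> < 1"
proof -
  obtain e where e: "e > 0" "ball y e \<subseteq> K0" using y by (auto simp: mem_interior)
  define y' where "y' = y + (e/2) *\<^sub>R axis k s"
  have "axis k s \<in> V0" unfolding V0_def using s by blast
  then have "norm (axis k s) = 1" by (rule V0_norm)
  then have "norm ((e/2) *\<^sub>R axis k s) = e/2" using e by simp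
  then have "dist y y' < e" using e by (simp add: y'_def dist_norm)
  then have "y' \<in> K0" using e by auto
  then have "s * y' $ k + \<bar>y' $ j\<bar> \<le> 1" using K0_cone s jk by blast
  moreover have "y' $ k = y $ k + e/2 * s" "y' $ j = y $ j" using jk by (auto simp: y'_def axis_comp)
  moreover have "s * s = 1" using s by auto
  ultimately have "s * y $ k + e/2 + \<bar>y $ j\<bar> \<le> 1" by (simp add: algebra_simps)
  then show ?thesis using e by simp
qed

lemma V0_frontier:
  assumes s: "s = 1 \<or> s = -1"
  shows "axis k s \<in> frontier K0"
proof -
  have inK: "axis k s \<in> K0" unfolding K0_def using s by (intro hull_inc) (auto simp: V0_def)
  obtain j where jk: "j \<noteq> k" using ex_other by blast
  have "axis k s \<notin> interior K0"
  proof
    assume "axis k s \<in> interior K0"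
    from K0_int[OF this s jk] show False using s jk by (auto simp: axis_comp)
  qed
  then show ?thesis using inK closure_subset by (auto simp: frontier_def)
qed

lemma V0_illum:
  assumes s: "s = 1 \<or> s = -1" and il: "illuminates K0 u (axis k s)" and jk: "j \<noteq> k"
  shows "s * u $ k + \<bar>u $ j\<bar> < 0"
proof -
  obtain t where t: "t > 0" "axis k s + t *\<^sub>R u \<in> interior K0" using il by (auto simp: illuminates_def)
  have "s * (axis k s + t *\<^sub>R u) $ k + \<bar>(axis k s + t *\<^sub>R u) $ j\<bar> < 1" by (rule K0_int[OF t(2) s jk])
  moreover have "(axis k s + t *\<^sub>R u) $ k = s + t * u $ k" "(axis k s + t *\<^sub>R u) $ j = t * u $ j"
    using jk by (auto simp: axis_comp)
  moreover have "s * s = 1" using s by auto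
  moreover have "\<bar>t * u $ j\<bar> = t * \<bar>u $ j\<bar>" using t by (simp add: abs_mult)
  ultimately have "t * (s * u $ k + \<bar>u $ j\<bar>) < 0" by (simp add: algebra_simps)
  then show ?thesis using t(1) by (simp add: mult_less_0_iff)
qed

lemma cone_disj:
  fixes u :: "real^3" and s s' :: real and k k' :: 3
  assumes s: "s = 1 \<or> s = -1" and s': "s' = 1 \<or> s' = -1"
    and h: "\<forall>j. j \<noteq> k \<longrightarrow> s * u $ k + \<bar>u $ j\<bar> < 0"
    and h': "\<forall>j. j \<noteq> k' \<longrightarrow> s' * u $ k' + \<bar>u $ j\<bar> < 0"
  shows "k = k' \<and> s = s'"
proof (cases "k = k'")
  case False
  have a: "s * u $ k + \<bar>u $ k'\<bar> < 0" using h False by auto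
  have b: "s' * u $ k' + \<bar>u $ k\<bar> < 0" using h' False by auto
  have "- \<bar>s * u $ k\<bar> \<le> s * u $ k" using abs_ge_minus_self[of "s * u $ k"] by linarith
  moreover have "\<bar>s * u $ k\<bar> = \<bar>u $ k\<bar>" using s by (auto simp: abs_mult)
  moreover have "- \<bar>s' * u $ k'\<bar> \<le> s' * u $ k'" using abs_ge_minus_self[of "s' * u $ k'"] by linarith
  moreover have "\<bar>s' * u $ k'\<bar> = \<bar>u $ k'\<bar>" using s' by (auto simp: abs_mult)
  ultimately show ?thesis using a b by linarith
next
  case True
  show ?thesis
  proof (rule ccontr)
    assume "\<not> (k = k' \<and> s = s')"
    then have "s' = - s" using True s s' by auto
    obtain j where jk: "j \<noteq> k" using ex_other by blast
    have "s * u $ k + \<bar>u $ j\<bar> < 0" using h jk by auto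
    moreover have "- s * u $ k + \<bar>u $ j\<bar> < 0" using h' jk True \<open>s' = - s\<close> by auto
    ultimately show False by linarith
  qed
qed

lemma lower6:
  assumes fin: "finite U" and ill: "\<forall>p\<in>frontier K0. \<exists>u\<in>U. illuminates K0 u p"
  shows "6 \<le> card U"
proof -
  define g where "g a = (SOME u. u \<in> U \<and> illuminates K0 u a)" for a
  have g: "g a \<in> U \<and> illuminates K0 (g a) a" if aV: "a \<in> V0" for a
  proof -
    obtain k s where ks: "s = 1 \<or> s = -1" "a = axis k s" using aV unfolding V0_def by blast
    then have "a \<in> frontier K0" using V0_frontier by blast
    then have "\<exists>u. u \<in> U \<and> illuminates K0 u a" using ill by blast
    then show ?thesis unfolding g_def by (rule someI_ex)
  qed
  have inj: "inj_on g V0"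
  proof (rule inj_onI)
    fix a a' assume a: "a \<in> V0" and a': "a' \<in> V0" and eq: "g a = g a'"
    obtain k s where ks: "s = 1 \<or> s = -1" "a = axis k s" using a unfolding V0_def by blast
    obtain k' s' where ks': "s' = 1 \<or> s' = -1" "a' = axis k' s'" using a' unfolding V0_def by blast
    have il1: "illuminates K0 (g a) (axis k s)" using g[OF a] ks(2) by simp
    have il2: "illuminates K0 (g a) (axis k' s')" using g[OF a'] ks'(2) eq by simp
    have h: "\<forall>j. j \<noteq> k \<longrightarrow> s * g a $ k + \<bar>g a $ j\<bar> < 0"
      using V0_illum[OF ks(1) il1] by blast
    have h': "\<forall>j. j \<noteq> k' \<longrightarrow> s' * g a $ k' + \<bar>g a $ j\<bar> < 0"
      using V0_illum[OF ks'(1) il2] by blast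
    have "k = k' \<and> s = s'" by (rule cone_disj[OF ks(1) ks'(1) h h'])
    then show "a = a'" using ks ks' by simp
  qed
  have "g ` V0 \<subseteq> U" using g by blast
  then have "card V0 \<le> card U" using card_inj_on_le[OF inj _ fin] by blast
  then show ?thesis using card_V0 by simp
qed

theorem part2: "illumination_number K0 = 6"
proof -
  define P where "P n \<longleftrightarrow> (\<exists>U. finite U \<and> card U = n \<and> U \<subseteq> sphere 0 1 \<and>
      (\<forall>p\<in>frontier K0. \<exists>u\<in>U. illuminates K0 u p))" for n
  have iP: "illumination_number K0 = (LEAST n. P n)" unfolding illumination_number_def P_def ..
  obtain U0 where U0: "finite U0" "card U0 \<le> 6" "U0 \<subseteq> sphere 0 1"
      "\<forall>p\<in>frontier K0. \<exists>u\<in>U0. illuminates K0 u p"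
    using part1_ex[OF cap_body_K0 sym_K0] by blast
  have "P (card U0)" unfolding P_def using U0 by blast
  then have le: "(LEAST n. P n) \<le> card U0" and PL: "P (LEAST n. P n)"
    by (rule Least_le, rule LeastI)
  from PL obtain U where "finite U" "card U = (LEAST n. P n)"
      "\<forall>p\<in>frontier K0. \<exists>u\<in>U. illuminates K0 u p" unfolding P_def by blast
  then have "6 \<le> (LEAST n. P n)" using lower6 by metis
  then show ?thesis using le U0(2) iP by simp
qed

theorem theorem2:
  shows "(\<forall>K :: (real^3) set. cap_body K \<and> centrally_symmetric K \<longrightarrow> illumination_number K \<le> 6)
       \<and> (\<exists>K :: (real^3) set. cap_body K \<and> centrally_symmetric K \<and> illumination_number K = 6)"
  using part1 cap_body_K0 sym_K0 part2 by blast


end
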